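(* Let $F\leq F'\leq\hat F$ be permutation groups on $\Omega$. The following are equivalent: (i) $F=F'$; (ii) $G(F,F')=U(F)$; (iii) $G(F,F')$ is a closed subgroup of $\mathrm{Aut}(\mathcal{T}_d)$; (iv) the vertex stabilizers $G(F,F')_v$ ($v\in V$) are compact in $G(F,F')$.
   Context: Standing notation. $\Omega$ is a finite set with $d=|\Omega|\geq 3$, $\mathcal{T}_d$ is the $d$-regular tree with vertex set $V$ and set $E$ of non-oriented edges, and $\mathrm{Aut}(\mathcal{T}_d)$ carries the permutation topology. Fix a coloring $c:E\to\Omega$ such that for every vertex $v$ its restriction $c_v$ to the set $E(v)$ of edges containing $v$ is a bijection onto $\Omega$. For $g\in\mathrm{Aut}(\mathcal{T}_d)$ and $v\in V$, the local permutation is $\sigma(g,v)=c_{gv}\circ g_v\circ c_v^{-1}\in\mathrm{Sym}(\Omega)$, where $g_v:E(v)\to E(gv)$ is induced by $g$. For $F\leq\mathrm{Sym}(\Omega)$: $U(F)=\{g:\sigma(g,v)\in F \ \forall v\}$; $G(F)=\{g:\sigma(g,v)\in F \text{ for all but finitely many } v\}$; $\hat F$ is the subgroup of permutations preserving each $F$-orbit. For $F\leq F'\leq\hat F$, $G(F,F')=G(F)\cap U(F')$, endowed with the unique group topology for which the inclusion $U(F)\hookrightarrow G(F,F')$ is continuous and open ($U(F)$ with the topology induced from $\mathrm{Aut}(\mathcal{T}_d)$). *)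

theory Defs
  imports "HOL-Analysis.Analysis" "HOL-Combinatorics.Permutations"
begin

text \<open>The vertex set V is the whole type 'v; adjacency is a relation adj.
  Non-oriented edges are the two-element sets {u,w} with adj u w.\<close>

definition edges_at :: "('v \<Rightarrow> 'v \<Rightarrow> bool) \<Rightarrow> 'v \<Rightarrow> 'v set set" where
  "edges_at adj v = {{v, w} | w. adj v w}"

definition is_cycle :: "('v \<Rightarrow> 'v \<Rightarrow> bool) \<Rightarrow> 'v list \<Rightarrow> bool" where
  "is_cycle adj xs \<longleftrightarrow> length xs \<ge> 3 \<and> distinct xs
     \<and> (\<forall>i. Suc i < length xs \<longrightarrow> adj (xs ! i) (xs ! Suc i))
     \<and> adj (last xs) (hd xs)"

definition regular_tree :: "('v \<Rightarrow> 'v \<Rightarrow> bool) \<Rightarrow> nat \<Rightarrow> bool" where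
  "regular_tree adj d \<longleftrightarrow>
     (\<forall>u w. adj u w \<longrightarrow> adj w u) \<and> (\<forall>u. \<not> adj u u)
     \<and> (\<forall>u w. adj\<^sup>*\<^sup>* u w)
     \<and> (\<nexists>xs. is_cycle adj xs)
     \<and> (\<forall>v. finite {w. adj v w} \<and> card {w. adj v w} = d)"

definition legal_coloring :: "('v \<Rightarrow> 'v \<Rightarrow> bool) \<Rightarrow> 'c set \<Rightarrow> ('v set \<Rightarrow> 'c) \<Rightarrow> bool" where
  "legal_coloring adj \<Omega> c \<longleftrightarrow> (\<forall>v. bij_betw c (edges_at adj v) \<Omega>)"

definition Aut :: "('v \<Rightarrow> 'v \<Rightarrow> bool) \<Rightarrow> ('v \<Rightarrow> 'v) set" where
  "Aut adj = {g. bij g \<and> (\<forall>x y. adj x y \<longleftrightarrow> adj (g x) (g y))}"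

text \<open>Permutation topology = topology of pointwise convergence (V discrete).\<close>
definition aut_top :: "('v \<Rightarrow> 'v \<Rightarrow> bool) \<Rightarrow> ('v \<Rightarrow> 'v) topology" where
  "aut_top adj = subtopology (product_topology (\<lambda>_. discrete_topology UNIV) UNIV) (Aut adj)"

text \<open>sigma(g,v) = c_{gv} o g_v o c_v^{-1}, as a permutation of \<Omega> (identity off \<Omega>).
  c_v^{-1}(\<omega>) is the edge {v,w} at v of colour \<omega>; g_v maps it to {g v, g w}.\<close>
definition local_perm ::
  "('v \<Rightarrow> 'v \<Rightarrow> bool) \<Rightarrow> 'c set \<Rightarrow> ('v set \<Rightarrow> 'c) \<Rightarrow> ('v \<Rightarrow> 'v) \<Rightarrow> 'v \<Rightarrow> 'c \<Rightarrow> 'c" where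
  "local_perm adj \<Omega> c g v = (\<lambda>\<omega>. if \<omega> \<in> \<Omega>
      then c (g ` (the_inv_into (edges_at adj v) c \<omega>)) else \<omega>)"

definition perm_group :: "'c set \<Rightarrow> ('c \<Rightarrow> 'c) set \<Rightarrow> bool" where
  "perm_group \<Omega> F \<longleftrightarrow> F \<subseteq> {p. p permutes \<Omega>} \<and> id \<in> F
     \<and> (\<forall>p\<in>F. \<forall>q\<in>F. p \<circ> q \<in> F) \<and> (\<forall>p\<in>F. inv p \<in> F)"

definition hat :: "'c set \<Rightarrow> ('c \<Rightarrow> 'c) set \<Rightarrow> ('c \<Rightarrow> 'c) set" where
  "hat \<Omega> F = {p. p permutes \<Omega> \<and> (\<forall>\<omega>\<in>\<Omega>. p \<omega> \<in> {f \<omega> | f. f \<in> F})}"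

definition U_grp ::
  "('v \<Rightarrow> 'v \<Rightarrow> bool) \<Rightarrow> 'c set \<Rightarrow> ('v set \<Rightarrow> 'c) \<Rightarrow> ('c \<Rightarrow> 'c) set \<Rightarrow> ('v \<Rightarrow> 'v) set" where
  "U_grp adj \<Omega> c F = {g \<in> Aut adj. \<forall>v. local_perm adj \<Omega> c g v \<in> F}"

definition G_grp ::
  "('v \<Rightarrow> 'v \<Rightarrow> bool) \<Rightarrow> 'c set \<Rightarrow> ('v set \<Rightarrow> 'c) \<Rightarrow> ('c \<Rightarrow> 'c) set \<Rightarrow> ('v \<Rightarrow> 'v) set" where
  "G_grp adj \<Omega> c F = {g \<in> Aut adj. finite {v. local_perm adj \<Omega> c g v \<notin> F}}"

definition G2_grp ::
  "('v \<Rightarrow> 'v \<Rightarrow> bool) \<Rightarrow> 'c set \<Rightarrow> ('v set \<Rightarrow> 'c) \<Rightarrow> ('c \<Rightarrow> 'c) set \<Rightarrow> ('c \<Rightarrow> 'c) set \<Rightarrow> ('v \<Rightarrow> 'v) set" where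
  "G2_grp adj \<Omega> c F F' = G_grp adj \<Omega> c F \<inter> U_grp adj \<Omega> c F'"

text \<open>The group topology on G(F,F') for which U(F) (with the topology induced from
  Aut(T_d)) is an open subgroup carrying its own topology: W is open iff W \<subseteq> G(F,F')
  and for every g in G(F,F') the set {u \<in> U(F). g u \<in> W} is open in U(F).\<close>
definition G2_top ::
  "('v \<Rightarrow> 'v \<Rightarrow> bool) \<Rightarrow> 'c set \<Rightarrow> ('v set \<Rightarrow> 'c) \<Rightarrow> ('c \<Rightarrow> 'c) set \<Rightarrow> ('c \<Rightarrow> 'c) set \<Rightarrow> ('v \<Rightarrow> 'v) topology" where
  "G2_top adj \<Omega> c F F' = topology (\<lambda>W. W \<subseteq> G2_grp adj \<Omega> c F F'
      \<and> (\<forall>g \<in> G2_grp adj \<Omega> c F F'.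
           openin (subtopology (aut_top adj) (U_grp adj \<Omega> c F)) {u \<in> U_grp adj \<Omega> c F. g \<circ> u \<in> W}))"

end

theory Submission
  imports Defs
begin


locale tr =
  fixes adj :: "'v \<Rightarrow> 'v \<Rightarrow> bool" and \<Omega> :: "'c set" and c :: "'v set \<Rightarrow> 'c"
  assumes finO: "finite \<Omega>" and d3: "card \<Omega> \<ge> 3"
    and rt: "regular_tree adj (card \<Omega>)" and lc: "legal_coloring adj \<Omega> c"
begin

lemma sym: "adj u w \<Longrightarrow> adj w u" using rt unfolding regular_tree_def by blast
lemma irr: "\<not> adj u u" using rt unfolding regular_tree_def by blast
lemma conn: "adj\<^sup>*\<^sup>* u w" using rt unfolding regular_tree_def by blast
lemma nocyc: "\<not> is_cycle adj xs" using rt unfolding regular_tree_def by blast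
lemma finN: "finite {w. adj v w}" using rt unfolding regular_tree_def by blast
lemma cardN: "card {w. adj v w} = card \<Omega>" using rt unfolding regular_tree_def by blast

definition col :: "'v \<Rightarrow> 'v \<Rightarrow> 'c" where "col x y = c {x, y}"
lemma col_sym: "col x y = col y x" unfolding col_def by (simp add: insert_commute)

lemma edges_at_img: "edges_at adj x = (\<lambda>y. {x, y}) ` {y. adj x y}"
  unfolding edges_at_def by auto

lemma inj_edge: "inj_on (\<lambda>y. {x, y}) {y. adj x y}"
proof (rule inj_onI)
  fix y z assume "y \<in> {y. adj x y}" "z \<in> {y. adj x y}" "{x, y} = {x, z}"
  then show "y = z" using irr by (metis doubleton_eq_iff mem_Collect_eq)
qed

lemma bij_col: "bij_betw (col x) {y. adj x y} \<Omega>"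
proof -
  have "bij_betw (\<lambda>y. {x, y}) {y. adj x y} (edges_at adj x)"
    using inj_edge edges_at_img by (simp add: bij_betw_def)
  moreover have "bij_betw c (edges_at adj x) \<Omega>" using lc unfolding legal_coloring_def by blast
  ultimately have "bij_betw (c \<circ> (\<lambda>y. {x, y})) {y. adj x y} \<Omega>" by (rule bij_betw_trans)
  moreover have "col x = (\<lambda>y. c {x, y})" by (rule ext) (simp add: col_def)
  ultimately show ?thesis by (simp add: o_def)
qed

definition nb :: "'v \<Rightarrow> 'c \<Rightarrow> 'v" where "nb x \<omega> = the_inv_into {y. adj x y} (col x) \<omega>"

lemma nb_adj: "\<omega> \<in> \<Omega> \<Longrightarrow> adj x (nb x \<omega>)"
  unfolding nb_def using bij_col[of x]
  by (metis bij_betw_def mem_Collect_eq the_inv_into_into subset_refl)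

lemma col_nb: "\<omega> \<in> \<Omega> \<Longrightarrow> col x (nb x \<omega>) = \<omega>"
  unfolding nb_def using bij_col[of x]
  by (metis bij_betw_def f_the_inv_into_f)

lemma nb_col: "adj x y \<Longrightarrow> nb x (col x y) = y"
  unfolding nb_def using bij_col[of x]
  by (metis bij_betw_def mem_Collect_eq the_inv_into_f_f)

lemma col_in: "adj x y \<Longrightarrow> col x y \<in> \<Omega>"
  using bij_col[of x] by (metis bij_betwE mem_Collect_eq)

lemma col_inj: "adj x y \<Longrightarrow> adj x z \<Longrightarrow> col x y = col x z \<Longrightarrow> y = z"
  by (metis nb_col)

lemma local_perm_eq: "\<omega> \<in> \<Omega> \<Longrightarrow> local_perm adj \<Omega> c g x \<omega> = col (g x) (g (nb x \<omega>))"
proof -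
  assume w: "\<omega> \<in> \<Omega>"
  have bj: "bij_betw c (edges_at adj x) \<Omega>" using lc unfolding legal_coloring_def by blast
  have e: "{x, nb x \<omega>} \<in> edges_at adj x" using nb_adj[OF w] unfolding edges_at_def by blast
  have "c {x, nb x \<omega>} = \<omega>" using col_nb[OF w] by (simp add: col_def)
  then have "the_inv_into (edges_at adj x) c \<omega> = {x, nb x \<omega>}"
    using bj e by (metis bij_betw_def the_inv_into_f_f)
  then show ?thesis using w unfolding local_perm_def col_def by simp
qed

lemma local_perm_out: "\<omega> \<notin> \<Omega> \<Longrightarrow> local_perm adj \<Omega> c g x \<omega> = \<omega>"
  unfolding local_perm_def by simp

section \<open>Distances\<close>

definition dist :: "'v \<Rightarrow> 'v \<Rightarrow> nat" where "dist r x = (LEAST n. (adj ^^ n) r x)"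

lemma dist_path: "(adj ^^ dist r x) r x"
proof -
  have "\<exists>n. (adj ^^ n) r x" using conn[of r x] by (simp add: rtranclp_power)
  then show ?thesis unfolding dist_def by (rule LeastI_ex)
qed

lemma dist_le: "(adj ^^ n) r x \<Longrightarrow> dist r x \<le> n"
  unfolding dist_def by (rule Least_le)

lemma dist_rr[simp]: "dist r r = 0"
  using dist_le[of 0 r r] by simp

lemma dist0: "dist r x = 0 \<Longrightarrow> x = r"
  using dist_path[of r x] by simp

lemma dist_adj: "adj x y \<Longrightarrow> dist r y \<le> Suc (dist r x)"
  using dist_path[of r x] by (meson dist_le relpowp_Suc_I)

lemma geodesic:
  obtains w where "w 0 = r" "w (dist r x) = x" "\<forall>i<dist r x. adj (w i) (w (Suc i))"
    "\<forall>i\<le>dist r x. dist r (w i) = i"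
proof -
  obtain w where w: "w 0 = r" "w (dist r x) = x" "\<forall>i<dist r x. adj (w i) (w (Suc i))"
    using dist_path[of r x] unfolding relpowp_fun_conv by blast
  have up: "dist r (w i) \<le> i" if "i \<le> dist r x" for i
  proof -
    have "(adj ^^ i) r (w i)" unfolding relpowp_fun_conv
      using w that by (intro exI[of _ w]) auto
    then show ?thesis by (rule dist_le)
  qed
  have step: "dist r (w (i + j)) \<le> dist r (w i) + j" if "i + j \<le> dist r x" for i j
    using that
  proof (induction j)
    case 0 then show ?case by simp
  next
    case (Suc j)
    then have "adj (w (i + j)) (w (Suc (i + j)))" using w(3) by simp
    then have "dist r (w (Suc (i+j))) \<le> Suc (dist r (w (i+j)))" by (rule dist_adj)
    then show ?case using Suc by simp
  qed
  have "\<forall>i\<le>dist r x. dist r (w i) = i"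
  proof (intro allI impI)
    fix i assume i: "i \<le> dist r x"
    have "dist r (w (i + (dist r x - i))) \<le> dist r (w i) + (dist r x - i)"
      using step[of i "dist r x - i"] i by simp
    then have "dist r x \<le> dist r (w i) + (dist r x - i)" using i w(2) by simp
    then show "dist r (w i) = i" using up[OF i] i by linarith
  qed
  then show ?thesis using that w by blast
qed

lemma no_cyc_fun:
  assumes "l \<ge> 3" "inj_on f {..<l}" "\<forall>i. Suc i < l \<longrightarrow> adj (f i) (f (Suc i))" "adj (f (l - 1)) (f 0)"
  shows False
proof -
  let ?xs = "map f [0..<l]"
  have "is_cycle adj ?xs"
    unfolding is_cycle_def
  proof (intro conjI allI impI)
    show "3 \<le> length ?xs" using assms by simp
    show "distinct ?xs" using assms(2) by (simp add: distinct_map lessThan_atLeast0)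
    fix i assume "Suc i < length ?xs"
    then show "adj (?xs ! i) (?xs ! Suc i)" using assms(3) by (simp add: nth_append)
  next
    have "l > 0" using assms by simp
    then show "adj (last ?xs) (hd ?xs)" using assms(4) by (simp add: last_map hd_map)
  qed
  then show False using nocyc by blast
qed

lemma two_geod:
  assumes P: "P 0 = r" "\<forall>i<m. adj (P i) (P (Suc i))" "\<forall>i\<le>m. dist r (P i) = i"
    and Q: "Q 0 = r" "\<forall>i<m. adj (Q i) (Q (Suc i))" "\<forall>i\<le>m. dist r (Q i) = i"
    and ne: "P m \<noteq> Q m"
    and ext: "adj (P m) (Q m) \<or> (\<exists>x. adj (P m) x \<and> adj (Q m) x \<and> dist r x = Suc m)"
  shows False
proof -
  define K where "K = {k. k \<le> m \<and> P k = Q k}"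
  define k0 where "k0 = Max K"
  have finK: "finite K" unfolding K_def by simp
  have "0 \<in> K" unfolding K_def using P Q by simp
  then have k0K: "k0 \<in> K" unfolding k0_def using finK by (metis Max_in empty_iff)
  have k0m: "k0 < m" using k0K ne unfolding K_def by (cases "k0 = m") auto
  have Pk0: "P k0 = Q k0" using k0K unfolding K_def by simp
  have maxK: "P t \<noteq> Q t" if "k0 < t" "t \<le> m" for t
  proof
    assume "P t = Q t"
    then have "t \<in> K" unfolding K_def using that by simp
    then have "t \<le> k0" unfolding k0_def using finK by simp
    then show False using that by simp
  qed
  define L where "L = m - k0"
  have L1: "L \<ge> 1" using k0m unfolding L_def by simp
  have Lm: "L \<le> m" unfolding L_def by simp
  have kL: "k0 + L = m" unfolding L_def using k0m by simp
  have adjQ: "adj (Q (Suc j)) (Q j)" if "j < m" for j using Q(2) that sym by blast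
  show False
  proof (cases "adj (P m) (Q m)")
    case True
    define f where "f i = (if i \<le> L then P (k0 + i) else Q (m + L + 1 - i))" for i
    have df: "dist r (f i) = (if i \<le> L then k0 + i else m + L + 1 - i)" if "i < 2*L+1" for i
      using that P(3) Q(3) k0m unfolding f_def L_def by auto
    show False
    proof (rule no_cyc_fun[of "2*L+1" f])
      show "3 \<le> 2*L+1" using L1 by simp
      show "inj_on f {..<2*L+1}"
      proof (rule inj_onI)
        fix i j assume i: "i \<in> {..<2*L+1}" and j: "j \<in> {..<2*L+1}" and e: "f i = f j"
        have de: "dist r (f i) = dist r (f j)" using e by simp
        show "i = j"
        proof (cases "i \<le> L"; cases "j \<le> L")
          assume "i \<le> L" "\<not> j \<le> L"
          then have "k0 + i = m + L + 1 - j" using de df i j by simp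
          moreover have "f i = P (k0+i)" "f j = Q (m + L + 1 - j)" using \<open>i \<le> L\<close> \<open>\<not> j \<le> L\<close> unfolding f_def by auto
          ultimately have "P (k0+i) = Q (k0+i)" using e by simp
          moreover have "k0 < k0 + i" using \<open>k0 + i = m + L + 1 - j\<close> j k0m unfolding L_def by auto
          ultimately show ?thesis using maxK[of "k0+i"] \<open>i \<le> L\<close> k0m unfolding L_def by auto
        next
          assume "\<not> i \<le> L" "j \<le> L"
          then have "k0 + j = m + L + 1 - i" using de df i j by simp
          moreover have "f j = P (k0+j)" "f i = Q (m + L + 1 - i)" using \<open>\<not> i \<le> L\<close> \<open>j \<le> L\<close> unfolding f_def by auto
          ultimately have "P (k0+j) = Q (k0+j)" using e by simp
          moreover have "k0 < k0 + j" using \<open>k0 + j = m + L + 1 - i\<close> i k0m unfolding L_def by auto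
          ultimately show ?thesis using maxK[of "k0+j"] \<open>j \<le> L\<close> k0m unfolding L_def by auto
        qed (use de df i j Lm in auto)
      qed
      show "\<forall>i. Suc i < 2*L+1 \<longrightarrow> adj (f i) (f (Suc i))"
      proof (intro allI impI)
        fix i assume i: "Suc i < 2*L+1"
        consider "i < L" | "i = L" | "i > L" by linarith
        then show "adj (f i) (f (Suc i))"
        proof cases
          case 1 then show ?thesis using P(2) k0m unfolding f_def L_def by auto
        next
          case 2 then show ?thesis using True k0m unfolding f_def L_def by auto
        next
          case 3
          then have "f i = Q (Suc (m + L - i))" "f (Suc i) = Q (m + L - i)"
            using i Lm unfolding f_def by (auto simp: Suc_diff_le)
          moreover have "m + L - i < m" using 3 L1 k0m by simp
          ultimately show ?thesis using adjQ by simp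
        qed
      qed
      have a: "m + L + 1 - (2*L+1-1) = Suc k0" unfolding L_def using k0m by arith
      have "f (2*L+1-1) = Q (Suc k0)" "f 0 = P k0" unfolding f_def using L1 a by auto
      then show "adj (f (2*L+1-1)) (f 0)" using adjQ[of k0] k0m Pk0 by simp
    qed
  next
    case False
    then obtain x where x: "adj (P m) x" "adj (Q m) x" "dist r x = Suc m" using ext by blast
    define f where "f i = (if i \<le> L then P (k0 + i) else if i = Suc L then x else Q (m + L + 2 - i))" for i
    have df: "dist r (f i) = (if i \<le> L then k0 + i else if i = Suc L then Suc m else m + L + 2 - i)" if "i < 2*L+2" for i
      using that P(3) Q(3) x(3) k0m unfolding f_def L_def by auto
    show False
    proof (rule no_cyc_fun[of "2*L+2" f])
      show "3 \<le> 2*L+2" using L1 by simp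
      show "inj_on f {..<2*L+2}"
      proof (rule inj_onI)
        fix i j assume i: "i \<in> {..<2*L+2}" and j: "j \<in> {..<2*L+2}" and e: "f i = f j"
        have de: "dist r (f i) = dist r (f j)" using e by simp
        show "i = j"
        proof (cases "i \<le> L \<and> j > Suc L")
          case True
          then have "k0 + i = m + L + 2 - j" using de df i j by simp
          moreover have "f i = P (k0+i)" "f j = Q (m + L + 2 - j)" using True unfolding f_def by auto
          ultimately have "P (k0+i) = Q (k0+i)" using e by simp
          moreover have "k0 < k0 + i" using \<open>k0 + i = m + L + 2 - j\<close> j k0m unfolding L_def by auto
          ultimately show ?thesis using maxK[of "k0+i"] True k0m unfolding L_def by (simp add: le_diff_conv2)
        next
          case F1: False
          show ?thesis
          proof (cases "j \<le> L \<and> i > Suc L")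
            case True
            then have "k0 + j = m + L + 2 - i" using de df i j by simp
            moreover have "f j = P (k0+j)" "f i = Q (m + L + 2 - i)" using True unfolding f_def by auto
            ultimately have "P (k0+j) = Q (k0+j)" using e by simp
            moreover have "k0 < k0 + j" using \<open>k0 + j = m + L + 2 - i\<close> i k0m unfolding L_def by auto
            ultimately show ?thesis using maxK[of "k0+j"] True k0m unfolding L_def by (simp add: le_diff_conv2)
          next
            case False
            then show ?thesis using F1 de df i j Lm kL
              by (auto split: if_splits)
          qed
        qed
      qed
      show "\<forall>i. Suc i < 2*L+2 \<longrightarrow> adj (f i) (f (Suc i))"
      proof (intro allI impI)
        fix i assume i: "Suc i < 2*L+2"
        consider "i < L" | "i = L" | "i = Suc L" | "i > Suc L" by linarith
        then show "adj (f i) (f (Suc i))"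
        proof cases
          case 1 then show ?thesis using P(2) k0m unfolding f_def L_def by auto
        next
          case 2 then show ?thesis using x k0m unfolding f_def L_def by auto
        next
          case 3 then show ?thesis using x sym k0m unfolding f_def L_def by auto
        next
          case 4
          then have "f i = Q (Suc (m + L + 1 - i))" "f (Suc i) = Q (m + L + 1 - i)"
            using i Lm unfolding f_def by (auto simp: Suc_diff_le)
          moreover have "m + L + 1 - i < m" using 4 L1 k0m by simp
          ultimately show ?thesis using adjQ by simp
        qed
      qed
      have a: "m + L + 2 - (2*L+2-1) = Suc k0" unfolding L_def using k0m by arith
      have "f (2*L+2-1) = Q (Suc k0)" "f 0 = P k0" unfolding f_def using L1 a by auto
      then show "adj (f (2*L+2-1)) (f 0)" using adjQ[of k0] k0m Pk0 by simp
    qed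
  qed
qed

lemma adj_dist: "adj x y \<Longrightarrow> dist r y = Suc (dist r x) \<or> dist r x = Suc (dist r y)"
proof -
  assume a: "adj x y"
  have "dist r x \<noteq> dist r y"
  proof
    assume e: "dist r x = dist r y"
    obtain P where P: "P 0 = r" "P (dist r x) = x" "\<forall>i<dist r x. adj (P i) (P (Suc i))"
      "\<forall>i\<le>dist r x. dist r (P i) = i" by (rule geodesic)
    obtain Q where Q: "Q 0 = r" "Q (dist r y) = y" "\<forall>i<dist r y. adj (Q i) (Q (Suc i))"
      "\<forall>i\<le>dist r y. dist r (Q i) = i" by (rule geodesic)
    show False
      by (rule two_geod[of P r "dist r x" Q]) (use P Q e a irr in auto)
  qed
  then show ?thesis using dist_adj[OF a, of r] dist_adj[OF sym[OF a], of r] by linarith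
qed

lemma parent_unique:
  assumes "adj x p" "adj x q" "dist r x = Suc (dist r p)" "dist r x = Suc (dist r q)"
  shows "p = q"
proof (rule ccontr)
  assume ne: "p \<noteq> q"
  obtain P where P: "P 0 = r" "P (dist r p) = p" "\<forall>i<dist r p. adj (P i) (P (Suc i))"
    "\<forall>i\<le>dist r p. dist r (P i) = i" by (rule geodesic)
  obtain Q where Q: "Q 0 = r" "Q (dist r q) = q" "\<forall>i<dist r q. adj (Q i) (Q (Suc i))"
    "\<forall>i\<le>dist r q. dist r (Q i) = i" by (rule geodesic)
  have e: "dist r p = dist r q" using assms by simp
  show False
    by (rule two_geod[of P r "dist r p" Q]) (use P Q e ne assms sym in auto)
qed

lemma parent_ex: "x \<noteq> r \<Longrightarrow> \<exists>p. adj x p \<and> dist r x = Suc (dist r p)"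
proof -
  assume x: "x \<noteq> r"
  obtain w where w: "w 0 = r" "w (dist r x) = x" "\<forall>i<dist r x. adj (w i) (w (Suc i))"
    "\<forall>i\<le>dist r x. dist r (w i) = i" by (rule geodesic)
  have pos: "dist r x > 0" using x dist0 by blast
  then obtain n where n: "dist r x = Suc n" by (cases "dist r x") auto
  have "adj (w n) x" using w n by (metis lessI)
  moreover have "dist r (w n) = n" using w n by simp
  ultimately show ?thesis using n sym by metis
qed

definition par :: "'v \<Rightarrow> 'v \<Rightarrow> 'v" where
  "par r x = (THE p. adj x p \<and> dist r x = Suc (dist r p))"

lemma par: "x \<noteq> r \<Longrightarrow> adj x (par r x) \<and> dist r x = Suc (dist r (par r x))"
proof -
  assume "x \<noteq> r"
  then obtain p where p: "adj x p \<and> dist r x = Suc (dist r p)" using parent_ex by blast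
  show ?thesis unfolding par_def
    by (rule theI[of _ p]) (use p parent_unique in blast)+
qed

lemma par_eq: "adj x p \<Longrightarrow> dist r x = Suc (dist r p) \<Longrightarrow> par r x = p"
  unfolding par_def using parent_unique by blast

lemma adj_cases: "adj x y \<Longrightarrow> (x \<noteq> r \<and> y = par r x) \<or> (y \<noteq> r \<and> x = par r y)"
proof -
  assume a: "adj x y"
  from adj_dist[OF a, of r] show ?thesis
  proof
    assume "dist r y = Suc (dist r x)"
    then show ?thesis using par_eq[OF sym[OF a]] by (metis dist_rr nat.distinct(1))
  next
    assume "dist r x = Suc (dist r y)"
    then show ?thesis using par_eq[OF a] by (metis dist_rr nat.distinct(1))
  qed
qed


end

context tr begin
section \<open>Construction of automorphisms\<close>

fun Hc :: "'v \<Rightarrow> ('c \<Rightarrow> 'c) \<Rightarrow> ('v \<Rightarrow> 'c \<Rightarrow> 'c \<Rightarrow> 'c \<Rightarrow> 'c) \<Rightarrow> nat \<Rightarrow> 'v \<Rightarrow> 'v \<times> ('c \<Rightarrow> 'c)" where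
  "Hc r s0 ch 0 x = (r, s0)"
| "Hc r s0 ch (Suc n) x = (nb (fst (Hc r s0 ch n (par r x))) (snd (Hc r s0 ch n (par r x)) (col x (par r x))),
      ch x (col x (par r x)) (snd (Hc r s0 ch n (par r x)) (col x (par r x))))"

definition gg where "gg r s0 ch x = fst (Hc r s0 ch (dist r x) x)"
definition ss where "ss r s0 ch x = snd (Hc r s0 ch (dist r x) x)"

lemma gg_r: "gg r s0 ch r = r" unfolding gg_def by simp
lemma ss_r: "ss r s0 ch r = s0" unfolding ss_def by simp

lemma gg_rec: "x \<noteq> r \<Longrightarrow> gg r s0 ch x = nb (gg r s0 ch (par r x)) (ss r s0 ch (par r x) (col x (par r x)))"
  unfolding gg_def ss_def using par[of x r] by simp
lemma ss_rec: "x \<noteq> r \<Longrightarrow> ss r s0 ch x = ch x (col x (par r x)) (ss r s0 ch (par r x) (col x (par r x)))"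
  unfolding ss_def using par[of x r] by simp

lemma local_ss:
  assumes "\<forall>y. dist r y \<le> n \<longrightarrow> ch y = ch' y"
  shows "dist r x \<le> n \<Longrightarrow> gg r s0 ch x = gg r s0 ch' x \<and> ss r s0 ch x = ss r s0 ch' x"
proof (induction "dist r x" arbitrary: x)
  case 0
  then have "x = r" using dist0 by simp
  then show ?case by (simp add: gg_r ss_r)
next
  case (Suc k)
  then have xr: "x \<noteq> r" by auto
  have "dist r (par r x) = k" using par[OF xr] Suc by simp
  then have ih: "gg r s0 ch (par r x) = gg r s0 ch' (par r x) \<and> ss r s0 ch (par r x) = ss r s0 ch' (par r x)"
    using Suc by simp
  have "ch x = ch' x" using assms Suc by simp
  then show ?case using gg_rec[OF xr] ss_rec[OF xr] ih by metis
qed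

definition good where
  "good s0 ch \<longleftrightarrow> s0 permutes \<Omega> \<and> (\<forall>x \<omega> a. \<omega> \<in> \<Omega> \<longrightarrow> a \<in> \<Omega> \<longrightarrow> ch x \<omega> a permutes \<Omega> \<and> ch x \<omega> a \<omega> = a)"

context
  fixes r :: 'v and s0 :: "'c \<Rightarrow> 'c" and ch :: "'v \<Rightarrow> 'c \<Rightarrow> 'c \<Rightarrow> 'c \<Rightarrow> 'c"
  assumes gd: "good s0 ch"
begin

abbreviation "g \<equiv> gg r s0 ch"
abbreviation "s \<equiv> ss r s0 ch"

lemma gd_s0: "s0 permutes \<Omega>" using gd unfolding good_def by (simp only:)
lemma gd_ch: "\<omega> \<in> \<Omega> \<Longrightarrow> a \<in> \<Omega> \<Longrightarrow> ch x \<omega> a permutes \<Omega>"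
  using gd unfolding good_def by blast
lemma gd_ch2: "\<omega> \<in> \<Omega> \<Longrightarrow> a \<in> \<Omega> \<Longrightarrow> ch x \<omega> a \<omega> = a"
  using gd unfolding good_def by blast

lemma ss_perm: "s x permutes \<Omega>"
proof (induction "dist r x" arbitrary: x)
  case 0
  then have "x = r" using dist0 by simp
  then show ?case using gd_s0 ss_r by (simp only:)
next
  case (Suc k)
  then have xr: "x \<noteq> r" by auto
  have "dist r (par r x) = k" using par[OF xr] Suc by simp
  then have ih: "s (par r x) permutes \<Omega>" using Suc(1) by blast
  have w: "col x (par r x) \<in> \<Omega>" using par[OF xr] col_in by blast
  then have a: "s (par r x) (col x (par r x)) \<in> \<Omega>" by (simp only: permutes_in_image[OF ih] w)
  have "ch x (col x (par r x)) (s (par r x) (col x (par r x))) permutes \<Omega>"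
    using gd_ch w a by blast
  then show ?case by (simp only: ss_rec[OF xr])
qed

lemma ss_in: "\<omega> \<in> \<Omega> \<Longrightarrow> s x \<omega> \<in> \<Omega>" by (simp only: permutes_in_image[OF ss_perm])

lemma g_nb: "\<omega> \<in> \<Omega> \<Longrightarrow> g (nb x \<omega>) = nb (g x) (s x \<omega>)"
proof -
  assume w: "\<omega> \<in> \<Omega>"
  let ?y = "nb x \<omega>"
  have a: "adj x ?y" using nb_adj[OF w] .
  from adj_cases[OF a, of r] show ?thesis
  proof
    assume h: "x \<noteq> r \<and> ?y = par r x"
    have cw: "col x ?y = \<omega>" using col_nb[OF w] .
    have sxw: "s x \<omega> = s ?y \<omega>"
    proof -
      have "s x = ch x \<omega> (s ?y \<omega>)" using ss_rec[of x] h cw by simp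
      moreover have "s ?y \<omega> \<in> \<Omega>" using ss_in w by blast
      ultimately show ?thesis using gd_ch2 w by simp
    qed
    have gx: "g x = nb (g ?y) (s ?y \<omega>)" using gg_rec[of x] h cw by simp
    have ain: "s ?y \<omega> \<in> \<Omega>" using ss_in w by blast
    have "adj (g ?y) (g x)" using gx nb_adj[OF ain] by simp
    moreover have "col (g x) (g ?y) = s ?y \<omega>" using gx col_nb[OF ain] col_sym by metis
    ultimately have "nb (g x) (s ?y \<omega>) = g ?y" using nb_col[OF sym[of "g ?y" "g x"]] by simp
    then show ?thesis using sxw by simp
  next
    assume h: "?y \<noteq> r \<and> x = par r ?y"
    have "col ?y x = \<omega>" using col_nb[OF w] col_sym by metis
    then show ?thesis using gg_rec[of ?y] h by simp
  qed
qed

lemma g_adj: "adj x y \<Longrightarrow> adj (g x) (g y)"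
proof -
  assume a: "adj x y"
  have w: "col x y \<in> \<Omega>" using col_in a .
  have "g y = nb (g x) (s x (col x y))" using nb_col[OF a] g_nb[OF w, where x=x] by simp
  then show ?thesis using nb_adj ss_in[OF w] by simp
qed

lemma lp_g: "local_perm adj \<Omega> c g x = s x"
proof
  fix \<omega> show "local_perm adj \<Omega> c g x \<omega> = s x \<omega>"
  proof (cases "\<omega> \<in> \<Omega>")
    case True
    then have "local_perm adj \<Omega> c g x \<omega> = col (g x) (g (nb x \<omega>))" by (rule local_perm_eq)
    also have "\<dots> = col (g x) (nb (g x) (s x \<omega>))" using g_nb[OF True] by simp
    also have "\<dots> = s x \<omega>" using col_nb ss_in[OF True] by simp
    finally show ?thesis .
  next
    case False
    then show ?thesis using local_perm_out ss_perm by (metis permutes_not_in)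
  qed
qed

lemma g_nb_inj: "adj p y \<Longrightarrow> adj p z \<Longrightarrow> g y = g z \<Longrightarrow> y = z"
proof -
  assume a: "adj p y" "adj p z" "g y = g z"
  have wy: "col p y \<in> \<Omega>" and wz: "col p z \<in> \<Omega>" using col_in a by auto
  have gy: "g y = nb (g p) (s p (col p y))" using nb_col[OF a(1)] g_nb[OF wy, where x=p] by simp
  have gz: "g z = nb (g p) (s p (col p z))" using nb_col[OF a(2)] g_nb[OF wz, where x=p] by simp
  have "s p (col p y) = col (g p) (g y)" using gy col_nb[OF ss_in[OF wy]] by simp
  moreover have "s p (col p z) = col (g p) (g z)" using gz col_nb[OF ss_in[OF wz]] by simp
  ultimately have "s p (col p y) = s p (col p z)" using a(3) by simp
  moreover have "inj (s p)" using ss_perm permutes_inj by blast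
  ultimately have "col p y = col p z" by (simp add: inj_eq)
  then show "y = z" using col_inj a by blast
qed

lemma g_dist: "dist r (g x) = dist r x \<and> (x \<noteq> r \<longrightarrow> par r (g x) = g (par r x))"
proof (induction "dist r x" arbitrary: x)
  case 0
  then have "x = r" using dist0 by simp
  then show ?case by (simp add: gg_r)
next
  case (Suc m)
  then have xr: "x \<noteq> r" by auto
  define p where "p = par r x"
  have pa: "adj x p" "dist r x = Suc (dist r p)" using par[OF xr] p_def by auto
  have dp: "dist r p = m" using pa Suc by simp
  have ih: "dist r (g p) = dist r p \<and> (p \<noteq> r \<longrightarrow> par r (g p) = g (par r p))"
    using Suc dp by simp
  have ga: "adj (g p) (g x)" using g_adj sym pa by blast
  have d1: "dist r (g x) = Suc m"
  proof -
    from adj_dist[OF ga, of r]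
    show ?thesis
    proof
      assume "dist r (g x) = Suc (dist r (g p))" then show ?thesis using ih dp by simp
    next
      assume h: "dist r (g p) = Suc (dist r (g x))"
      then have pr: "p \<noteq> r" using ih by auto
      have "par r (g p) = g x" using par_eq[OF ga h] .
      then have "g (par r p) = g x" using ih pr by simp
      moreover have "adj p (par r p)" using par[OF pr] by simp
      ultimately have "par r p = x" using g_nb_inj[of p "par r p" x] sym[OF pa(1)] by simp
      then show ?thesis using par[OF pr] pa by simp
    qed
  qed
  moreover have "par r (g x) = g p"
    using par_eq[OF sym[OF ga]] d1 ih dp by simp
  ultimately show ?case using p_def Suc by simp
qed

lemma g_inj: "inj g"
proof -
  have "\<forall>x y. dist r x = n \<longrightarrow> g x = g y \<longrightarrow> x = y" for n
  proof (induction n)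
    case 0
    then show ?case
    proof (intro allI impI)
      fix x y assume "dist r x = 0" "g x = g y"
      then have "x = r" using dist0 by simp
      then have "g y = r" using \<open>g x = g y\<close> gg_r by simp
      then have "dist r y = 0" using g_dist[of y] by simp
      then show "x = y" using dist0[of r y] \<open>x = r\<close> by simp
    qed
  next
    case (Suc n)
    show ?case
    proof (intro allI impI)
      fix x y assume d: "dist r x = Suc n" and e: "g x = g y"
      have dy: "dist r y = Suc n" using g_dist[of x] g_dist[of y] d e by simp
      have xr: "x \<noteq> r" and yr: "y \<noteq> r" using d dy by auto
      have "g (par r x) = g (par r y)" using g_dist[of x] g_dist[of y] xr yr e by simp
      moreover have "dist r (par r x) = n" using par[OF xr] d by simp
      ultimately have "par r x = par r y" using Suc by blast
      moreover have "adj (par r x) x" using par[OF xr] sym by blast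
      moreover have "adj (par r y) y" using par[OF yr] sym by blast
      ultimately show "x = y" using g_nb_inj[of "par r x" x y] e by simp
    qed
  qed
  then show ?thesis by (intro injI) blast
qed

lemma g_surj: "surj g"
proof -
  have "\<exists>x. g x = y" for y
    using conn[of r y]
  proof (induction rule: rtranclp_induct)
    case base then show ?case using gg_r by blast
  next
    case (step y z)
    then obtain x where x: "g x = y" by blast
    have b: "col y z \<in> \<Omega>" using col_in step by blast
    then obtain \<omega> where w: "\<omega> \<in> \<Omega>" "s x \<omega> = col y z"
      using permutes_image[OF ss_perm[of x]] by (metis imageE)
    have "g (nb x \<omega>) = nb y (col y z)" using g_nb[OF w(1)] w x by simp
    also have "\<dots> = z" using nb_col step by blast
    finally have "g (nb x \<omega>) = z" .
    then show ?case by blast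
  qed
  then show ?thesis by (metis surjI)
qed

lemma g_adj_rev: "adj (g x) (g y) \<Longrightarrow> adj x y"
proof -
  assume a: "adj (g x) (g y)"
  have b: "col (g x) (g y) \<in> \<Omega>" using col_in a by blast
  then obtain \<omega> where w: "\<omega> \<in> \<Omega>" "s x \<omega> = col (g x) (g y)"
    using permutes_image[OF ss_perm[of x]] by (metis imageE)
  have "g (nb x \<omega>) = nb (g x) (col (g x) (g y))" using g_nb[OF w(1)] w by simp
  also have "\<dots> = g y" using nb_col a by blast
  finally have "g (nb x \<omega>) = g y" .
  then have "nb x \<omega> = y" using g_inj by (meson injD)
  then show ?thesis using nb_adj[OF w(1), of x] by simp
qed

lemma g_Aut: "g \<in> Aut adj"
  unfolding Aut_def using g_inj g_surj g_adj g_adj_rev bij_def by blast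

end

end


locale grp = tr adj \<Omega> c for adj :: "'v \<Rightarrow> 'v \<Rightarrow> bool" and \<Omega> :: "'c set" and c +
  fixes F F' :: "('c \<Rightarrow> 'c) set"
  assumes pgF: "perm_group \<Omega> F" and pgF': "perm_group \<Omega> F'"
    and sub: "F \<subseteq> F'" and hatF: "F' \<subseteq> hat \<Omega> F"
begin

lemma F_perm: "p \<in> F \<Longrightarrow> p permutes \<Omega>" using pgF unfolding perm_group_def by blast
lemma F'_perm: "p \<in> F' \<Longrightarrow> p permutes \<Omega>" using pgF' unfolding perm_group_def by blast
lemma F_comp: "p \<in> F \<Longrightarrow> q \<in> F \<Longrightarrow> p \<circ> q \<in> F" using pgF unfolding perm_group_def by blast
lemma F'_comp: "p \<in> F' \<Longrightarrow> q \<in> F' \<Longrightarrow> p \<circ> q \<in> F'" using pgF' unfolding perm_group_def by blast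
lemma F_inv: "p \<in> F \<Longrightarrow> inv p \<in> F" using pgF unfolding perm_group_def by blast
lemma F_id: "id \<in> F" using pgF unfolding perm_group_def by blast
lemma F'_id: "id \<in> F'" using pgF' unfolding perm_group_def by blast

lemma orbit: "q \<in> F' \<Longrightarrow> \<omega> \<in> \<Omega> \<Longrightarrow> \<exists>f\<in>F. f \<omega> = q \<omega>"
proof -
  assume q: "q \<in> F'" and w: "\<omega> \<in> \<Omega>"
  have "\<forall>\<omega>\<in>\<Omega>. q \<omega> \<in> {f \<omega> |f. f \<in> F}" using hatF q unfolding hat_def by auto
  then have "q \<omega> \<in> {f \<omega> |f. f \<in> F}" using w by blast
  then show ?thesis by auto
qed

lemma F_cancel: "p \<in> F \<Longrightarrow> q permutes \<Omega> \<Longrightarrow> p \<circ> q \<in> F \<Longrightarrow> q \<in> F"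
proof -
  assume a: "p \<in> F" "q permutes \<Omega>" "p \<circ> q \<in> F"
  have "inv p \<circ> (p \<circ> q) = q" using permutes_inv_o(2)[OF F_perm[OF a(1)]] by (simp add: o_assoc)
  then show ?thesis using F_comp[OF F_inv[OF a(1)] a(3)] by simp
qed

lemma F_cancel2: "p permutes \<Omega> \<Longrightarrow> q \<in> F \<Longrightarrow> p \<circ> q \<in> F \<Longrightarrow> p \<in> F"
proof -
  assume a: "p permutes \<Omega>" "q \<in> F" "p \<circ> q \<in> F"
  have "(p \<circ> q) \<circ> inv q = p" using permutes_inv_o(1)[OF F_perm[OF a(2)]] by (metis comp_assoc comp_id)
  then show ?thesis using F_comp[OF a(3) F_inv[OF a(2)]] by simp
qed

context fixes sF assumes sF: "sF \<in> F'" "sF \<notin> F"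
begin

definition Qs :: "'v set \<Rightarrow> 'v \<Rightarrow> ('c \<Rightarrow> 'c) set" where
  "Qs S x = (if x \<in> S then F' - F else F)"

definition chS :: "'v set \<Rightarrow> 'v \<Rightarrow> 'c \<Rightarrow> 'c \<Rightarrow> 'c \<Rightarrow> 'c" where
  "chS S x \<omega> a = (if \<exists>q\<in>Qs S x. q \<omega> = a then (SOME q. q \<in> Qs S x \<and> q \<omega> = a) else Transposition.transpose \<omega> a)"

definition s0S :: "'v set \<Rightarrow> 'v \<Rightarrow> 'c \<Rightarrow> 'c" where
  "s0S S r = (if r \<in> S then sF else id)"

lemma Qs_sub: "Qs S x \<subseteq> F'" unfolding Qs_def using sub by auto

lemma good_S: "good (s0S S r) (chS S)"
  unfolding good_def
proof (rule conjI; (intro allI impI)?)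
  show "s0S S r permutes \<Omega>" unfolding s0S_def using F'_perm[OF sF(1)] permutes_id by simp
  fix x \<omega> a assume w: "\<omega> \<in> \<Omega>" "a \<in> \<Omega>"
  show "chS S x \<omega> a permutes \<Omega> \<and> chS S x \<omega> a \<omega> = a"
  proof (cases "\<exists>q\<in>Qs S x. q \<omega> = a")
    case True
    then have "(SOME q. q \<in> Qs S x \<and> q \<omega> = a) \<in> Qs S x \<and> (SOME q. q \<in> Qs S x \<and> q \<omega> = a) \<omega> = a"
      by (metis (mono_tags, lifting) someI)
    then show ?thesis using True Qs_sub F'_perm unfolding chS_def by auto
  next
    case False
    then show ?thesis unfolding chS_def using permutes_swap_id[OF w] by simp
  qed
qed

lemma exists_Q: "q \<in> F' \<Longrightarrow> \<omega> \<in> \<Omega> \<Longrightarrow> \<exists>p\<in>Qs S x. p \<omega> = q \<omega>"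
proof -
  assume q: "q \<in> F'" and w: "\<omega> \<in> \<Omega>"
  obtain f2 where f2: "f2 \<in> F" "f2 \<omega> = q \<omega>" using orbit[OF q w] by blast
  show ?thesis
  proof (cases "x \<in> S")
    case False then show ?thesis unfolding Qs_def using f2 by auto
  next
    case True
    obtain f1 where f1: "f1 \<in> F" "f1 \<omega> = sF \<omega>" using orbit[OF sF(1) w] by blast
    define f where "f = f2 \<circ> inv f1"
    have fF: "f \<in> F" unfolding f_def using F_comp F_inv f1 f2 by blast
    have "inv f1 (sF \<omega>) = \<omega>" using f1 permutes_inverses(2)[OF F_perm[OF f1(1)]] by metis
    then have "(f \<circ> sF) \<omega> = q \<omega>" unfolding f_def using f2 by simp
    moreover have "f \<circ> sF \<in> F'" using F'_comp fF sub sF by blast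
    moreover have "f \<circ> sF \<notin> F" using F_cancel[OF fF F'_perm[OF sF(1)]] sF by blast
    moreover have "Qs S x = F' - F" unfolding Qs_def using True by simp
    ultimately show ?thesis by (intro bexI[of _ "f \<circ> sF"]) auto
  qed
qed

abbreviation "gS S r \<equiv> gg r (s0S S r) (chS S)"
abbreviation "sS S r \<equiv> ss r (s0S S r) (chS S)"

lemma sS_prop: "sS S r x \<in> F' \<and> (sS S r x \<in> F \<longleftrightarrow> x \<notin> S)"
proof (induction "dist r x" arbitrary: x)
  case 0
  then have "x = r" using dist0 by simp
  then show ?case using sF F_id sub unfolding s0S_def by (auto simp: ss_r)
next
  case (Suc k)
  then have xr: "x \<noteq> r" by auto
  have "dist r (par r x) = k" using par[OF xr] Suc by simp
  then have ih: "sS S r (par r x) \<in> F'" using Suc(1) by blast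
  have w: "col x (par r x) \<in> \<Omega>" using par[OF xr] col_in by blast
  define a where "a = sS S r (par r x) (col x (par r x))"
  have ex: "\<exists>q\<in>Qs S x. q (col x (par r x)) = a" unfolding a_def using exists_Q[OF ih w] by simp
  then have "(SOME q. q \<in> Qs S x \<and> q (col x (par r x)) = a) \<in> Qs S x"
    by (metis (mono_tags, lifting) someI)
  moreover have "sS S r x = (SOME q. q \<in> Qs S x \<and> q (col x (par r x)) = a)"
    using ss_rec[OF xr] ex unfolding chS_def a_def by simp
  ultimately have "sS S r x \<in> Qs S x" by simp
  then show ?case unfolding Qs_def using sub by (auto split: if_splits)
qed

lemma gS_Aut: "gS S r \<in> Aut adj" using g_Aut[OF good_S] .
lemma gS_r: "gS S r r = r" using gg_r .
lemma lp_gS: "local_perm adj \<Omega> c (gS S r) x = sS S r x" using lp_g[OF good_S] .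

lemma gS_U': "gS S r \<in> U_grp adj \<Omega> c F'"
  unfolding U_grp_def using gS_Aut lp_gS sS_prop by auto

lemma gS_bad: "{v. local_perm adj \<Omega> c (gS S r) v \<notin> F} = S"
  using lp_gS sS_prop by auto

lemma gS_G2: "finite S \<Longrightarrow> gS S r \<in> G2_grp adj \<Omega> c F F'"
  unfolding G2_grp_def G_grp_def using gS_Aut gS_bad gS_U' by auto

lemma gS_local: "\<forall>y. dist r y \<le> n \<longrightarrow> (y \<in> S \<longleftrightarrow> y \<in> S') \<Longrightarrow> dist r x \<le> n \<Longrightarrow> gS S r x = gS S' r x"
proof -
  assume h: "\<forall>y. dist r y \<le> n \<longrightarrow> (y \<in> S \<longleftrightarrow> y \<in> S')" and d: "dist r x \<le> n"
  have "r \<in> S \<longleftrightarrow> r \<in> S'" using h by simp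
  then have e: "s0S S r = s0S S' r" unfolding s0S_def by simp
  have "\<forall>y. dist r y \<le> n \<longrightarrow> chS S y = chS S' y"
    using h unfolding chS_def Qs_def by (auto intro!: ext)
  then show ?thesis using local_ss[of r n "chS S" "chS S'" x "s0S S r"] d e by simp
qed

end
end


abbreviation PT :: "('v \<Rightarrow> 'v) topology" where
  "PT \<equiv> product_topology (\<lambda>_::'v. discrete_topology (UNIV::'v set)) (UNIV::'v set)"

lemma topspace_PT: "topspace PT = UNIV"
  by auto

lemma fd_open:
  assumes "finite A" "\<And>f f'. \<forall>y\<in>A. f y = f' y \<Longrightarrow> f \<in> X \<Longrightarrow> f' \<in> X"
  shows "openin PT X"
  unfolding openin_product_topology_alt
proof (intro ballI)
  fix f0 assume f0: "f0 \<in> X"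
  define U where "U i = (if i \<in> A then {f0 i} else UNIV)" for i
  have "finite {i \<in> UNIV. U i \<noteq> topspace (discrete_topology UNIV)}"
    by (rule finite_subset[OF _ assms(1)]) (auto simp: U_def)
  moreover have "\<forall>i\<in>UNIV. openin (discrete_topology UNIV) (U i)" by simp
  moreover have "f0 \<in> Pi\<^sub>E UNIV U" unfolding U_def by auto
  moreover have "Pi\<^sub>E UNIV U \<subseteq> X"
  proof
    fix f assume "f \<in> Pi\<^sub>E UNIV U"
    then have "\<forall>i. f i \<in> U i" by (simp add: PiE_iff)
    then have "\<forall>y\<in>A. f0 y = f y" unfolding U_def by (metis singletonD)
    then show "f \<in> X" using assms(2) f0 by blast
  qed
  ultimately show "\<exists>U. finite {i \<in> UNIV. U i \<noteq> topspace (discrete_topology UNIV)} \<and>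
                 (\<forall>i\<in>UNIV. openin (discrete_topology UNIV) (U i)) \<and> f0 \<in> Pi\<^sub>E UNIV U \<and> Pi\<^sub>E UNIV U \<subseteq> X"
    by blast
qed

lemma fd_closed:
  assumes "finite A" "\<And>f f'. \<forall>y\<in>A. f y = f' y \<Longrightarrow> f \<in> X \<Longrightarrow> f' \<in> X"
  shows "closedin PT X"
proof -
  have "openin PT (- X)"
  proof (rule fd_open[OF assms(1)])
    fix f f' assume h: "\<forall>y\<in>A. f y = f' y" "f \<in> - X"
    show "f' \<in> - X"
    proof
      assume "f' \<in> X"
      moreover have "\<forall>y\<in>A. f' y = f y" using h by simp
      ultimately have "f \<in> X" using assms(2) by blast
      then show False using h by simp
    qed
  qed
  then show ?thesis unfolding closedin_def by (simp add: Compl_eq_Diff_UNIV)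
qed

lemma in_PiE_open:
  assumes "openin PT Op" "f \<in> Op"
  obtains A where "finite A" "\<And>f'. \<forall>y\<in>A. f y = f' y \<Longrightarrow> f' \<in> Op"
proof -
  obtain U where U: "finite {i \<in> UNIV. U i \<noteq> topspace (discrete_topology (UNIV::'a set))}"
    "f \<in> Pi\<^sub>E UNIV U" "Pi\<^sub>E UNIV U \<subseteq> Op"
    using assms unfolding openin_product_topology_alt by blast
  define A where "A = {i. U i \<noteq> UNIV}"
  have "finite A" using U(1) unfolding A_def by simp
  moreover have "f' \<in> Op" if "\<forall>y\<in>A. f y = f' y" for f'
  proof -
    have "f' i \<in> U i" for i
    proof (cases "U i = UNIV")
      case False
      then have "f' i = f i" using that unfolding A_def by simp
      then show ?thesis using U(2) by (simp add: PiE_iff)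
    qed simp
    then have "f' \<in> Pi\<^sub>E UNIV U" by (simp add: PiE_iff)
    then show ?thesis using U(3) by blast
  qed
  ultimately show ?thesis using that by blast
qed

context tr begin

lemma ball_fin: "finite {y. dist r y \<le> n}"
proof (induction n)
  case 0
  have "{y. dist r y \<le> 0} = {r}" using dist0 by auto
  then show ?case by simp
next
  case (Suc n)
  have "{y. dist r y \<le> Suc n} \<subseteq> {y. dist r y \<le> n} \<union> (\<Union>x\<in>{y. dist r y \<le> n}. {w. adj x w})"
  proof
    fix y assume y: "y \<in> {y. dist r y \<le> Suc n}"
    show "y \<in> {y. dist r y \<le> n} \<union> (\<Union>x\<in>{y. dist r y \<le> n}. {w. adj x w})"
    proof (cases "dist r y \<le> n")
      case False
      then have yr: "y \<noteq> r" by auto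
      then have "adj (par r y) y" "dist r (par r y) \<le> n" using par[OF yr] sym y False by auto
      then show ?thesis by blast
    qed simp
  qed
  moreover have "finite ({y. dist r y \<le> n} \<union> (\<Union>x\<in>{y. dist r y \<le> n}. {w. adj x w}))"
    using Suc finN by simp
  ultimately show ?case by (rule finite_subset)
qed

lemma dist_ex: "\<exists>x. dist r x = n"
proof (induction n)
  case 0 then show ?case using dist_rr by blast
next
  case (Suc n)
  then obtain x where x: "dist r x = n" by blast
  have "card {w. adj x w} - card {par r x} \<le> card ({w. adj x w} - {par r x})"
    by (rule diff_card_le_card_Diff) simp
  then have "card ({w. adj x w} - {par r x}) > 0" using cardN[of x] d3 by simp
  then have "{w. adj x w} - {par r x} \<noteq> {}" by (metis card.empty less_irrefl)
  then obtain y where y: "adj x y" "y \<noteq> par r x" by blast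
  have "dist r y = Suc n"
  proof -
    from adj_dist[OF y(1), of r] show ?thesis
    proof
      assume "dist r x = Suc (dist r y)"
      then have "par r x = y" by (rule par_eq[OF y(1)])
      then show ?thesis using y by simp
    qed (use x in simp)
  qed
  then show ?case by blast
qed

lemma inf_V: "infinite (UNIV :: 'v set)"
proof
  assume f: "finite (UNIV :: 'v set)"
  then have "finite (dist r ` UNIV)" by simp
  moreover have "dist r ` UNIV = (UNIV :: nat set)" using dist_ex by (metis surj_def)
  ultimately show False by simp
qed

lemma Aut_comp: "k \<in> Aut adj \<Longrightarrow> h \<in> Aut adj \<Longrightarrow> k \<circ> h \<in> Aut adj"
  unfolding Aut_def by (auto intro: bij_comp)

lemma Aut_id: "id \<in> Aut adj" unfolding Aut_def by simp

lemma Aut_dist: "k \<in> Aut adj \<Longrightarrow> k r = r \<Longrightarrow> dist r (k x) \<le> dist r x"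
proof -
  assume k: "k \<in> Aut adj" "k r = r"
  have "(adj ^^ n) (k a) (k b)" if "(adj ^^ n) a b" for n a b
    using that
  proof (induction n arbitrary: b)
    case 0 then show ?case by simp
  next
    case (Suc n)
    then obtain z where "(adj ^^ n) a z" "adj z b" by auto
    then show ?case using Suc k unfolding Aut_def by auto
  qed
  then have "(adj ^^ dist r x) r (k x)" using dist_path[of r x] k by metis
  then show ?thesis by (rule dist_le)
qed

lemma lp_det: "\<forall>y\<in>insert x (nb x ` \<Omega>). f y = f' y \<Longrightarrow> local_perm adj \<Omega> c f x = local_perm adj \<Omega> c f' x"
proof
  fix \<omega> assume h: "\<forall>y\<in>insert x (nb x ` \<Omega>). f y = f' y"
  show "local_perm adj \<Omega> c f x \<omega> = local_perm adj \<Omega> c f' x \<omega>"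
  proof (cases "\<omega> \<in> \<Omega>")
    case True then show ?thesis using local_perm_eq h by simp
  qed (simp add: local_perm_out)
qed

lemma lp_id: "local_perm adj \<Omega> c id x = id"
proof
  fix \<omega> show "local_perm adj \<Omega> c id x \<omega> = id \<omega>"
    by (cases "\<omega> \<in> \<Omega>") (simp_all add: local_perm_eq local_perm_out col_nb)
qed

lemma lp_comp: "u \<in> Aut adj \<Longrightarrow> local_perm adj \<Omega> c (h \<circ> u) x = local_perm adj \<Omega> c h (u x) \<circ> local_perm adj \<Omega> c u x"
proof
  fix \<omega> assume u: "u \<in> Aut adj"
  show "local_perm adj \<Omega> c (h \<circ> u) x \<omega> = (local_perm adj \<Omega> c h (u x) \<circ> local_perm adj \<Omega> c u x) \<omega>"
  proof (cases "\<omega> \<in> \<Omega>")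
    case True
    have a: "adj (u x) (u (nb x \<omega>))" using nb_adj[OF True] u unfolding Aut_def by blast
    define \<omega>' where "\<omega>' = col (u x) (u (nb x \<omega>))"
    have w': "\<omega>' \<in> \<Omega>" unfolding \<omega>'_def using col_in[OF a] .
    have n: "nb (u x) \<omega>' = u (nb x \<omega>)" unfolding \<omega>'_def using nb_col[OF a] .
    have "local_perm adj \<Omega> c u x \<omega> = \<omega>'" unfolding \<omega>'_def using local_perm_eq[OF True] .
    moreover have "local_perm adj \<Omega> c h (u x) \<omega>' = col (h (u x)) (h (u (nb x \<omega>)))"
      using local_perm_eq[OF w'] n by simp
    ultimately show ?thesis using local_perm_eq[OF True, of "h \<circ> u"] by simp
  qed (simp add: local_perm_out)
qed

end


context grp begin

abbreviation "UU \<equiv> U_grp adj \<Omega> c F"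
abbreviation "G2 \<equiv> G2_grp adj \<Omega> c F F'"
abbreviation "AT \<equiv> aut_top adj"

lemma topspace_AT: "topspace AT = Aut adj"
  unfolding aut_top_def by simp

lemma UU_Aut: "UU \<subseteq> Aut adj" unfolding U_grp_def by auto
lemma G2_Aut: "G2 \<subseteq> Aut adj" unfolding G2_grp_def G_grp_def by auto
lemma UU_G2: "UU \<subseteq> G2"
  unfolding G2_grp_def G_grp_def U_grp_def using sub by auto

lemma lp_closed: "closedin PT {f. local_perm adj \<Omega> c f x \<in> F}"
proof (rule fd_closed[of "insert x (nb x ` \<Omega>)"])
  show "finite (insert x (nb x ` \<Omega>))" using finO by simp
  fix f f' assume a: "\<forall>y\<in>insert x (nb x ` \<Omega>). f y = f' y" "f \<in> {f. local_perm adj \<Omega> c f x \<in> F}"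
  have "local_perm adj \<Omega> c f x = local_perm adj \<Omega> c f' x" by (rule lp_det[OF a(1)])
  then show "f' \<in> {f. local_perm adj \<Omega> c f x \<in> F}" using a(2) by simp
qed

lemma U_closed: "closedin AT UU"
proof -
  have "closedin PT (\<Inter>x. {f. local_perm adj \<Omega> c f x \<in> F})"
    by (rule closedin_Inter) (use lp_closed in auto)
  moreover have "UU = (\<Inter>x. {f. local_perm adj \<Omega> c f x \<in> F}) \<inter> Aut adj"
    unfolding U_grp_def by auto
  ultimately show ?thesis unfolding aut_top_def closedin_subtopology by blast
qed

lemma id_UU: "id \<in> UU" unfolding U_grp_def using Aut_id lp_id F_id by simp

lemma comp_G2:
  assumes h: "h \<in> G2" and u: "u \<in> UU"
  shows "h \<circ> u \<in> G2 \<and> {x. local_perm adj \<Omega> c (h \<circ> u) x \<notin> F} = u -` {x. local_perm adj \<Omega> c h x \<notin> F}"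
proof -
  have uA: "u \<in> Aut adj" using u UU_Aut by blast
  have hA: "h \<in> Aut adj" using h G2_Aut by blast
  have lpu: "local_perm adj \<Omega> c u x \<in> F" for x using u unfolding U_grp_def by simp
  have lph: "local_perm adj \<Omega> c h x \<in> F'" for x using h unfolding G2_grp_def U_grp_def by simp
  have eq: "local_perm adj \<Omega> c (h \<circ> u) x \<in> F \<longleftrightarrow> local_perm adj \<Omega> c h (u x) \<in> F" for x
    using lp_comp[OF uA, of h x] F_comp[OF _ lpu] F_cancel2[OF F'_perm[OF lph] lpu] by auto
  have bad: "{x. local_perm adj \<Omega> c (h \<circ> u) x \<notin> F} = u -` {x. local_perm adj \<Omega> c h x \<notin> F}"
    using eq by auto
  have "inj u" using uA unfolding Aut_def bij_def by blast
  moreover have "finite {x. local_perm adj \<Omega> c h x \<notin> F}" using h unfolding G2_grp_def G_grp_def by simp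
  ultimately have "finite {x. local_perm adj \<Omega> c (h \<circ> u) x \<notin> F}"
    using bad finite_vimageI by metis
  moreover have "local_perm adj \<Omega> c (h \<circ> u) x \<in> F'" for x
    using lp_comp[OF uA, of h x] F'_comp[OF lph] lpu sub by auto
  moreover have "h \<circ> u \<in> Aut adj" using Aut_comp hA uA by blast
  ultimately show ?thesis using bad unfolding G2_grp_def G_grp_def U_grp_def by simp
qed

definition G2P where
  "G2P = (\<lambda>W. W \<subseteq> G2 \<and> (\<forall>g \<in> G2. openin (subtopology AT UU) {u \<in> UU. g \<circ> u \<in> W}))"

lemma G2P_istop: "istopology G2P"
  unfolding istopology_def
proof (intro conjI allI impI)
  fix S T assume "G2P S" "G2P T"
  then show "G2P (S \<inter> T)" unfolding G2P_def
  proof (intro conjI ballI)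
    fix g assume a: "S \<subseteq> G2 \<and> (\<forall>g\<in>G2. openin (subtopology AT UU) {u \<in> UU. g \<circ> u \<in> S})"
      "T \<subseteq> G2 \<and> (\<forall>g\<in>G2. openin (subtopology AT UU) {u \<in> UU. g \<circ> u \<in> T})" "g \<in> G2"
    have "{u \<in> UU. g \<circ> u \<in> S \<inter> T} = {u \<in> UU. g \<circ> u \<in> S} \<inter> {u \<in> UU. g \<circ> u \<in> T}" by auto
    then show "openin (subtopology AT UU) {u \<in> UU. g \<circ> u \<in> S \<inter> T}" using a by (simp add: openin_Int)
  qed auto
next
  fix K assume K: "\<forall>W\<in>K. G2P W"
  show "G2P (\<Union>K)" unfolding G2P_def
  proof (intro conjI ballI)
    show "\<Union>K \<subseteq> G2" using K unfolding G2P_def by auto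
    fix g assume g: "g \<in> G2"
    have "{u \<in> UU. g \<circ> u \<in> \<Union>K} = \<Union>((\<lambda>W. {u \<in> UU. g \<circ> u \<in> W}) ` K)" by auto
    moreover have "openin (subtopology AT UU) (\<Union>((\<lambda>W. {u \<in> UU. g \<circ> u \<in> W}) ` K))"
      using K g unfolding G2P_def by (intro openin_Union) auto
    ultimately show "openin (subtopology AT UU) {u \<in> UU. g \<circ> u \<in> \<Union>K}" by simp
  qed
qed

lemma G2top_open: "openin (G2_top adj \<Omega> c F F') W \<longleftrightarrow> G2P W"
proof -
  have "G2_top adj \<Omega> c F F' = topology G2P" unfolding G2_top_def G2P_def by simp
  then show ?thesis using G2P_istop by simp
qed

lemma G2_open: "G2P G2"
  unfolding G2P_def
proof (intro conjI ballI)
  fix g assume g: "g \<in> G2"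
  have "{u \<in> UU. g \<circ> u \<in> G2} = topspace (subtopology AT UU)"
    using comp_G2[OF g] UU_Aut topspace_AT by auto
  then show "openin (subtopology AT UU) {u \<in> UU. g \<circ> u \<in> G2}" by (simp only: openin_topspace)
qed simp

lemma topspace_G2top: "topspace (G2_top adj \<Omega> c F F') = G2"
  unfolding topspace_def using G2top_open G2_open unfolding G2P_def by auto

end


context grp begin

context fixes sF assumes sF: "sF \<in> F'" "sF \<notin> F"
begin

abbreviation "gT S r \<equiv> gg r (s0S sF S r) (chS S)"

lemma T_Aut: "gT S r \<in> Aut adj" by (rule gS_Aut[OF sF])
lemma T_r: "gT S r r = r" by (rule gg_r)
lemma T_bad: "{v. local_perm adj \<Omega> c (gT S r) v \<notin> F} = S" by (rule gS_bad[OF sF])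
lemma T_G2: "finite S \<Longrightarrow> gT S r \<in> G2" by (rule gS_G2[OF sF])
lemma T_local: "\<forall>y. dist r y \<le> n \<longrightarrow> (y \<in> S \<longleftrightarrow> y \<in> S') \<Longrightarrow> dist r x \<le> n \<Longrightarrow> gT S r x = gT S' r x"
  by (rule gS_local[OF sF])

lemma not_closed: "\<not> closedin AT G2"
proof
  assume cl: "closedin AT G2"
  define r :: 'v where "r = undefined"
  define gI where "gI = gT UNIV r"
  have gIA: "gI \<in> Aut adj" unfolding gI_def by (rule T_Aut)
  have "gI \<notin> G2"
  proof
    assume "gI \<in> G2"
    then have "finite {v. local_perm adj \<Omega> c gI v \<notin> F}" unfolding G2_grp_def G_grp_def by simp
    then show False using T_bad[where S=UNIV and r=r] inf_V unfolding gI_def by simp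
  qed
  have "openin AT (topspace AT - G2)" using cl unfolding closedin_def by simp
  then obtain T where T: "openin PT T" "Aut adj - G2 = T \<inter> Aut adj"
    unfolding topspace_AT unfolding aut_top_def openin_subtopology by auto
  have "gI \<in> T" using T(2) gIA \<open>gI \<notin> G2\<close> by blast
  then obtain A where A: "finite A" "\<And>f'. \<forall>y\<in>A. gI y = f' y \<Longrightarrow> f' \<in> T"
    using in_PiE_open[OF T(1)] by metis
  define n where "n = Max (insert 0 (dist r ` A))"
  have nA: "\<forall>y\<in>A. dist r y \<le> n" unfolding n_def using A(1) by simp
  define Sn where "Sn = {y. dist r y \<le> n}"
  have "\<forall>y\<in>A. gI y = gT Sn r y"
    unfolding gI_def using T_local[where r=r and n=n and S=Sn and S'=UNIV] nA unfolding Sn_def by simp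
  then have "gT Sn r \<in> T" using A(2) by blast
  moreover have "gT Sn r \<in> G2" using T_G2 ball_fin unfolding Sn_def by blast
  ultimately show False using T(2) G2_Aut by blast
qed

definition Wk :: "'v \<Rightarrow> nat \<Rightarrow> ('v \<Rightarrow> 'v) set" where
  "Wk r k = {g \<in> G2. {x. local_perm adj \<Omega> c g x \<notin> F} \<subseteq> {y. dist r y \<le> k}}"

lemma Wk_open: "G2P (Wk r k)"
  unfolding G2P_def
proof (intro conjI ballI)
  show "Wk r k \<subseteq> G2" unfolding Wk_def by auto
  fix h assume h: "h \<in> G2"
  define Nh where "Nh = {x. local_perm adj \<Omega> c h x \<notin> F}"
  define Op where "Op = {f. \<forall>y\<in>Nh. \<exists>x\<in>{y. dist r y \<le> k}. f x = y}"
  have oOp: "openin PT Op"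
  proof (rule fd_open[of "{y. dist r y \<le> k}"])
    show "finite {y. dist r y \<le> k}" by (rule ball_fin)
    fix f f' assume "\<forall>y\<in>{y. dist r y \<le> k}. f y = f' y" "f \<in> Op"
    then show "f' \<in> Op" unfolding Op_def by fastforce
  qed
  have eq: "{u \<in> UU. h \<circ> u \<in> Wk r k} = (Op \<inter> Aut adj) \<inter> UU"
  proof (intro set_eqI iffI)
    fix u assume u: "u \<in> {u \<in> UU. h \<circ> u \<in> Wk r k}"
    then have uU: "u \<in> UU" and uA: "u \<in> Aut adj" using UU_Aut by auto
    have b: "u -` Nh \<subseteq> {y. dist r y \<le> k}"
      using u comp_G2[OF h uU] unfolding Wk_def Nh_def by auto
    have "bij u" using uA unfolding Aut_def by simp
    have "u \<in> Op" unfolding Op_def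
    proof (intro CollectI ballI)
      fix y assume y: "y \<in> Nh"
      have "u (inv u y) = y" using \<open>bij u\<close> by (simp add: bij_is_surj surj_f_inv_f)
      then have "inv u y \<in> u -` Nh" using y by simp
      then show "\<exists>x\<in>{y. dist r y \<le> k}. u x = y" using b \<open>u (inv u y) = y\<close> by blast
    qed
    then show "u \<in> (Op \<inter> Aut adj) \<inter> UU" using uU uA by simp
  next
    fix u assume u: "u \<in> (Op \<inter> Aut adj) \<inter> UU"
    then have uU: "u \<in> UU" and uA: "u \<in> Aut adj" by auto
    have iu: "inj u" using uA unfolding Aut_def bij_def by simp
    have "u -` Nh \<subseteq> {y. dist r y \<le> k}"
    proof
      fix x assume "x \<in> u -` Nh"
      then obtain x' where "dist r x' \<le> k" "u x' = u x" using u unfolding Op_def by auto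
      then show "x \<in> {y. dist r y \<le> k}" using iu by (metis injD mem_Collect_eq)
    qed
    then show "u \<in> {u \<in> UU. h \<circ> u \<in> Wk r k}"
      using comp_G2[OF h uU] uU unfolding Wk_def Nh_def by auto
  qed
  have "openin AT (Op \<inter> Aut adj)" unfolding aut_top_def openin_subtopology using oOp by blast
  then show "openin (subtopology AT UU) {u \<in> UU. h \<circ> u \<in> Wk r k}"
    unfolding eq openin_subtopology by blast
qed

lemma not_compact: "\<not> compactin (G2_top adj \<Omega> c F F') {g \<in> G2. g r = r}"
proof
  assume cp: "compactin (G2_top adj \<Omega> c F F') {g \<in> G2. g r = r}"
  have cov: "{g \<in> G2. g r = r} \<subseteq> \<Union>(range (Wk r))"
  proof
    fix g assume g: "g \<in> {g \<in> G2. g r = r}"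
    define B where "B = {x. local_perm adj \<Omega> c g x \<notin> F}"
    have fB: "finite B" using g unfolding B_def G2_grp_def G_grp_def by simp
    define k where "k = Max (insert 0 (dist r ` B))"
    have "B \<subseteq> {y. dist r y \<le> k}" unfolding k_def using fB by auto
    then have "g \<in> Wk r k" using g unfolding Wk_def B_def by simp
    then show "g \<in> \<Union>(range (Wk r))" by blast
  qed
  have "\<forall>W\<in>range (Wk r). openin (G2_top adj \<Omega> c F F') W" using Wk_open G2top_open by auto
  then obtain \<F> where F: "finite \<F>" "\<F> \<subseteq> range (Wk r)" "{g \<in> G2. g r = r} \<subseteq> \<Union>\<F>"
    using cp cov unfolding compactin_def by meson
  obtain C where C: "finite C" "\<F> = Wk r ` C" using finite_subset_image[OF F(1) F(2)] by blast
  define K where "K = Max (insert 0 C)"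
  have mono: "Wk r k \<subseteq> Wk r K" if "k \<in> C" for k
  proof -
    have "k \<le> K" unfolding K_def using C(1) that by simp
    then show ?thesis unfolding Wk_def by auto
  qed
  have sub: "{g \<in> G2. g r = r} \<subseteq> Wk r K" using F(3) C(2) mono by blast
  obtain x where x: "dist r x = Suc K" using dist_ex by blast
  have "gT {x} r \<in> {g \<in> G2. g r = r}" using T_G2[where S="{x}" and r=r] T_r by simp
  then have "gT {x} r \<in> Wk r K" using sub by blast
  then show False using T_bad[where S="{x}" and r=r] x unfolding Wk_def by auto
qed

end
end


context grp begin

lemma surj_loc:
  assumes inj: "inj f" and ad: "\<forall>x y. adj x y \<longleftrightarrow> adj (f x) (f y)"
  shows "surj f"
proof -
  have img: "f ` {w. adj x w} = {w. adj (f x) w}" for x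
  proof (rule card_subset_eq)
    show "finite {w. adj (f x) w}" by (rule finN)
    show "f ` {w. adj x w} \<subseteq> {w. adj (f x) w}" using ad by auto
    have "card (f ` {w. adj x w}) = card {w. adj x w}"
      using inj by (simp add: card_image inj_on_subset)
    then show "card (f ` {w. adj x w}) = card {w. adj (f x) w}" using cardN by simp
  qed
  fix r0 :: 'v
  have "y \<in> range f" for y
    using conn[of "f r0" y]
  proof (induction rule: rtranclp_induct)
    case base then show ?case by simp
  next
    case (step y z)
    then obtain x where x: "y = f x" by blast
    have "z \<in> f ` {w. adj x w}" using img[of x] step x by simp
    then show ?case by blast
  qed
  then show ?thesis by blast
qed

lemma stabU_compact: "compactin PT {g \<in> UU. g v = v}"
proof -
  define B where "B x = {y. dist v y \<le> dist v x}" for x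
  define D where "D p = {f. f v = v \<and> f (fst p) \<in> B (fst p) \<and> (adj (fst p) (snd p) \<longleftrightarrow> adj (f (fst p)) (f (snd p)))
       \<and> (fst p \<noteq> snd p \<longrightarrow> f (fst p) \<noteq> f (snd p)) \<and> local_perm adj \<Omega> c f (fst p) \<in> F}" for p
  define E where "E = \<Inter>(range D)"
  have Dc: "closedin PT (D p)" for p
  proof (rule fd_closed[of "insert v (insert (fst p) (insert (snd p) (nb (fst p) ` \<Omega>)))"])
    show "finite (insert v (insert (fst p) (insert (snd p) (nb (fst p) ` \<Omega>))))" using finO by simp
    fix f f' assume a: "\<forall>y\<in>insert v (insert (fst p) (insert (snd p) (nb (fst p) ` \<Omega>))). f y = f' y" "f \<in> D p"
    have "local_perm adj \<Omega> c f (fst p) = local_perm adj \<Omega> c f' (fst p)" by (rule lp_det) (use a(1) in auto)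
    then show "f' \<in> D p" using a unfolding D_def by auto
  qed
  have Ec: "closedin PT E" unfolding E_def by (rule closedin_Inter) (use Dc in auto)
  have K: "compactin PT (Pi\<^sub>E UNIV B)"
    unfolding compactin_PiE compactin_discrete_topology B_def using ball_fin by simp
  have EK: "E \<subseteq> Pi\<^sub>E UNIV B"
  proof
    fix f assume "f \<in> E"
    then have "f x \<in> B x" for x unfolding E_def D_def by (auto dest: spec[of _ "(x, x)"])
    then show "f \<in> Pi\<^sub>E UNIV B" by (simp add: PiE_iff)
  qed
  have cE: "compactin PT E" by (rule closed_compactin[OF K EK Ec])
  have "E = {g \<in> UU. g v = v}"
  proof (intro set_eqI iffI)
    fix f assume fE: "f \<in> E"
    have all: "f \<in> D (x, y)" for x y using fE unfolding E_def by blast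
    have fv: "f v = v" using all[of v v] unfolding D_def by simp
    have ad: "\<forall>x y. adj x y \<longleftrightarrow> adj (f x) (f y)" using all unfolding D_def by simp
    have inj: "inj f" using all unfolding D_def by (auto intro!: injI)
    have "surj f" by (rule surj_loc[OF inj ad])
    then have "f \<in> Aut adj" unfolding Aut_def using inj ad bij_def by blast
    moreover have "local_perm adj \<Omega> c f x \<in> F" for x using all[of x x] unfolding D_def by simp
    ultimately show "f \<in> {g \<in> UU. g v = v}" using fv unfolding U_grp_def by simp
  next
    fix f assume f: "f \<in> {g \<in> UU. g v = v}"
    then have fA: "f \<in> Aut adj" and fv: "f v = v" using UU_Aut by auto
    have "f \<in> D p" for p
    proof -
      have "dist v (f (fst p)) \<le> dist v (fst p)" by (rule Aut_dist[OF fA fv])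
      moreover have "inj f" using fA unfolding Aut_def bij_def by simp
      ultimately show ?thesis using f fA unfolding D_def B_def U_grp_def Aut_def by (auto dest: injD)
    qed
    then show "f \<in> E" unfolding E_def by blast
  qed
  then show ?thesis using cE by simp
qed

lemma stab_compact:
  assumes eq: "G2 = UU"
  shows "compactin (G2_top adj \<Omega> c F F') {g \<in> G2. g v = v}"
proof -
  have c1: "compactin (subtopology AT UU) {g \<in> UU. g v = v}"
    unfolding compactin_subtopology aut_top_def using stabU_compact UU_Aut by auto
  have cm: "continuous_map (subtopology AT UU) (G2_top adj \<Omega> c F F') id"
    unfolding continuous_map_def
  proof (intro conjI allI impI)
    show "id \<in> topspace (subtopology AT UU) \<rightarrow> topspace (G2_top adj \<Omega> c F F')"
      using topspace_G2top eq by auto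
    fix W assume "openin (G2_top adj \<Omega> c F F') W"
    then have "G2P W" using G2top_open by simp
    moreover have "id \<in> G2" using id_UU eq by simp
    ultimately have "openin (subtopology AT UU) {u \<in> UU. id \<circ> u \<in> W}" unfolding G2P_def by blast
    moreover have "{x \<in> topspace (subtopology AT UU). id x \<in> W} = {u \<in> UU. id \<circ> u \<in> W}"
      using UU_Aut topspace_AT by auto
    ultimately show "openin (subtopology AT UU) {x \<in> topspace (subtopology AT UU). id x \<in> W}" by simp
  qed
  have "compactin (G2_top adj \<Omega> c F F') (id ` {g \<in> UU. g v = v})"
    by (rule image_compactin[OF c1 cm])
  then show ?thesis using eq by simp
qed

end

theorem mainTheorem15:
  fixes adj :: "'v \<Rightarrow> 'v \<Rightarrow> bool" and \<Omega> :: "'c set" and c :: "'v set \<Rightarrow> 'c"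
    and F F' :: "('c \<Rightarrow> 'c) set"
  assumes "finite \<Omega>" and "card \<Omega> \<ge> 3"
    and "regular_tree adj (card \<Omega>)"
    and "legal_coloring adj \<Omega> c"
    and "perm_group \<Omega> F" and "perm_group \<Omega> F'"
    and "F \<subseteq> F'" and "F' \<subseteq> hat \<Omega> F"
  shows "(F = F' \<longleftrightarrow> G2_grp adj \<Omega> c F F' = U_grp adj \<Omega> c F)
       \<and> (G2_grp adj \<Omega> c F F' = U_grp adj \<Omega> c F \<longleftrightarrow> closedin (aut_top adj) (G2_grp adj \<Omega> c F F'))
       \<and> (closedin (aut_top adj) (G2_grp adj \<Omega> c F F') \<longleftrightarrow>
            (\<forall>v. compactin (G2_top adj \<Omega> c F F') {g \<in> G2_grp adj \<Omega> c F F'. g v = v}))"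
proof -
  interpret grp adj \<Omega> c F F'
    by unfold_locales (use assms in auto)
  show ?thesis
  proof (cases "F = F'")
    case True
    have eq: "G2_grp adj \<Omega> c F F' = U_grp adj \<Omega> c F"
      using UU_G2 True unfolding G2_grp_def by auto
    have cl: "closedin (aut_top adj) (G2_grp adj \<Omega> c F F')" using eq U_closed by simp
    have cp: "\<forall>v. compactin (G2_top adj \<Omega> c F F') {g \<in> G2_grp adj \<Omega> c F F'. g v = v}"
      using stab_compact[OF eq] by blast
    show ?thesis using True eq cl cp by simp
  next
    case False
    then obtain sF where sF: "sF \<in> F'" "sF \<notin> F" using assms(7) by blast
    have ncl: "\<not> closedin (aut_top adj) (G2_grp adj \<Omega> c F F')" using not_closed[OF sF] .
    have ne: "G2_grp adj \<Omega> c F F' \<noteq> U_grp adj \<Omega> c F" using ncl U_closed by auto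
    have ncp: "\<not> compactin (G2_top adj \<Omega> c F F') {g \<in> G2_grp adj \<Omega> c F F'. g undefined = undefined}"
      using not_compact[OF sF] .
    show ?thesis using False ncl ne ncp by blast
  qed
qed

end
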